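(* Let $(X,d,\mu)$, $p$, $\underline{Q}_\mu$ be as in the context, and let $S^1\in\mathcal{ADR}_0(X)$ be a closed set. Then for each $c\ge1$ there is a constant $C>0$ such that whenever $\{B_{r_i}(x_i)\}_{i=1}^{M}$, $M\in\mathbb N$, is an $(S^1,c)$-nice family with $\max_i 4cr_i\le1$, then for every $f\in L^{loc}_1(\mu\lfloor_{S^1})$, $$\sum_{i=1}^{M}\frac{\mu(B_{r_i}(x_i))}{r_i^p}\Big(\mathcal E_{\mu\lfloor_{S^1}}(f,B_{2cr_i}(x_i))\Big)^p\le C\int_{S^1}(f^\sharp_{\mu\lfloor_{S^1}}(x))^p\,d\mu(x).$$
   Context: Standing setting: $(X,d)$ complete separable metric space, $\mu$ a Borel regular locally finite outer measure, $\operatorname{supp}\mu=X$, uniformly locally doubling (for every $R>0$, $\sup_{r\in(0,R]}\sup_x\mu(B_{2r}(x))/\mu(B_r(x))<\infty$). Balls are closed, $B_r(x)=\{y:d(x,y)\le r\}$. A fixed $p\in(1,\infty)$; $X$ supports a weak local $(1,p)$-Poincaré inequality (for every $R>0$ there are $C,\lambda\ge1$ with $\inf_c\frac{1}{\mu(B_r(x))}\int_{B_r(x)}|f-c|d\mu\le Cr(\frac{1}{\mu(B_{\lambda r}(x))}\int_{B_{\lambda r}(x)}(\operatorname{lip}f)^pd\mu)^{1/p}$ for Lipschitz $f$, $x\in X$, $r\in(0,R]$). Notation: $\mathcal E_{\mathfrak m}(g,G):=\inf_{c\in\mathbb R}\mathfrak m(G)^{-1}\int_G|g-c|d\mathfrak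 m$ if $\mathfrak m(G)>0$, $0$ if $\mathfrak m(G)=0$; $\mathfrak m\lfloor_S(E)=\mathfrak m(E\cap S)$. $\mathcal H_{0,\delta}(E):=\inf\{\sum\mu(B_{r_i}(x_i)):E\subset\bigcup B_{r_i}(x_i),0<r_i<\delta\}$, $\mathcal H_0=\lim_{\delta\to0}\mathcal H_{0,\delta}$. $S^1\in\mathcal{ADR}_0(X)$ means $S^1$ is closed and there are $\varkappa_1,\varkappa_2>0$ with $\varkappa_1\mu(B_r(x))\le\mathcal H_0(B_r(x)\cap S^1)\le\varkappa_2\mu(B_r(x))$ for $x\in S^1$, $r\in(0,1]$. A finite family of closed balls $\{B_{r_i}(x_i)\}$ is $(S^1,c)$-nice if the balls are pairwise disjoint, $\max_ir_i\le1$, and $B_{cr_i}(x_i)\cap S^1\ne\emptyset$ for all $i$. Maximal function: $f^\sharp_{\mu\lfloor_{S^1}}(x):=\sup_{r\in(0,2]}\frac1r\mathcal E_{\mu\lfloor_{S^1}}(f,B_r(x))$. *)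

theory Defs
  imports "HOL-Analysis.Analysis"
begin

definition pow_enn :: "real \<Rightarrow> ennreal \<Rightarrow> ennreal" where
  "pow_enn q t = (if t = \<infinity> then \<infinity> else ennreal (enn2real t powr q))"

definition mrestr :: "'a measure \<Rightarrow> 'a set \<Rightarrow> 'a measure" where
  "mrestr m S = density m (indicator S)"

definition mean_osc :: "'a measure \<Rightarrow> ('a \<Rightarrow> real) \<Rightarrow> 'a set \<Rightarrow> ennreal" where
  "mean_osc m g G =
     (if emeasure m G = 0 then 0
      else (INF c::real. (\<integral>\<^sup>+ y. ennreal \<bar>g y - c\<bar> * indicator G y \<partial>m) / emeasure m G))"

definition sharp_max :: "'a measure \<Rightarrow> ('a::metric_space \<Rightarrow> real) \<Rightarrow> 'a \<Rightarrow> ennreal" where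
  "sharp_max m f x = (SUP r\<in>{0<..2::real}. mean_osc m f (cball x r) / ennreal r)"

definition lip :: "('a::metric_space \<Rightarrow> real) \<Rightarrow> 'a \<Rightarrow> ennreal" where
  "lip f x = Liminf (at_right (0::real))
     (\<lambda>r. SUP y\<in>cball x r. ennreal (\<bar>f y - f x\<bar> / r))"

definition H0_delta :: "'a measure \<Rightarrow> real \<Rightarrow> 'a::metric_space set \<Rightarrow> ennreal" where
  "H0_delta m \<delta> E = (INF cov \<in> {(I, xs, rs). I \<subseteq> (UNIV::nat set)
        \<and> (\<forall>i\<in>I. 0 < rs i \<and> rs i < \<delta>) \<and> E \<subseteq> (\<Union>i\<in>I. cball (xs i) (rs i))}.
      case cov of (I, xs, rs) \<Rightarrow>
        (\<Sum>i. (if i \<in> I then emeasure m (cball (xs i) (rs i)) else 0)))"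

text \<open>H_0 = lim_{delta -> 0} H_{0,delta}; H_{0,delta} is nonincreasing in delta, so this is a supremum.\<close>
definition H0 :: "'a measure \<Rightarrow> 'a::metric_space set \<Rightarrow> ennreal" where
  "H0 m E = (SUP \<delta>\<in>{0<..}. H0_delta m \<delta> E)"

definition ADR0 :: "'a measure \<Rightarrow> 'a::metric_space set \<Rightarrow> bool" where
  "ADR0 m S \<longleftrightarrow> closed S \<and> (\<exists>k1 k2::real. k1 > 0 \<and> k2 > 0 \<and>
     (\<forall>x\<in>S. \<forall>r\<in>{0<..1}.
        ennreal k1 * emeasure m (cball x r) \<le> H0 m (cball x r \<inter> S)
      \<and> H0 m (cball x r \<inter> S) \<le> ennreal k2 * emeasure m (cball x r)))"

definition nice_family :: "'a::metric_space set \<Rightarrow> real \<Rightarrow> nat \<Rightarrow> (nat \<Rightarrow> 'a) \<Rightarrow> (nat \<Rightarrow> real) \<Rightarrow> bool" where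
  "nice_family S c M xs rs \<longleftrightarrow>
     (\<forall>i<M. 0 < rs i \<and> rs i \<le> 1 \<and> cball (xs i) (c * rs i) \<inter> S \<noteq> {})
   \<and> (\<forall>i<M. \<forall>j<M. i \<noteq> j \<longrightarrow> cball (xs i) (rs i) \<inter> cball (xs j) (rs j) = {})"

definition loc_integrable :: "'a::metric_space measure \<Rightarrow> ('a \<Rightarrow> real) \<Rightarrow> bool" where
  "loc_integrable m f \<longleftrightarrow> (\<forall>K. compact K \<longrightarrow> set_integrable m K f)"

definition standing_setting :: "'a::polish_space measure \<Rightarrow> real \<Rightarrow> bool" where
  "standing_setting m p \<longleftrightarrow>
     sets m = sets borel \<and>
     (\<forall>x. \<exists>r>0. emeasure m (cball x r) < \<infinity>) \<and>
     (\<forall>U. open U \<and> U \<noteq> {} \<longrightarrow> emeasure m U > 0) \<and>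
     (\<forall>R>0. \<exists>D::real. \<forall>r\<in>{0<..R}. \<forall>x.
         emeasure m (cball x (2*r)) \<le> ennreal D * emeasure m (cball x r)) \<and>
     1 < p \<and>
     (\<forall>R>0. \<exists>C lam::real. C \<ge> 1 \<and> lam \<ge> 1 \<and>
        (\<forall>f::'a \<Rightarrow> real. (\<exists>L. L-lipschitz_on UNIV f) \<longrightarrow>
          (\<forall>x. \<forall>r\<in>{0<..R}.
             mean_osc m f (cball x r) \<le> ennreal (C * r) *
               pow_enn (1/p) ((\<integral>\<^sup>+ y. pow_enn p (lip f y) * indicator (cball x (lam*r)) y \<partial>m)
                               / emeasure m (cball x (lam*r))))))"

end

theory Submission
  imports Defs
begin

lemma ss_sets: "standing_setting \<mu> p \<Longrightarrow> sets \<mu> = sets borel"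
  unfolding standing_setting_def by blast

lemma ss_cball_sets: "standing_setting \<mu> p \<Longrightarrow> cball x r \<in> sets \<mu>"
  using ss_sets by (metis borel_closed closed_cball)

lemma ss_closed_sets: "standing_setting \<mu> p \<Longrightarrow> closed S \<Longrightarrow> S \<in> sets \<mu>"
  using ss_sets by (metis borel_closed)

lemma doubling_iter:
  fixes \<mu> :: "'a::metric_space measure"
  assumes sets: "\<And>x r. cball x r \<in> sets \<mu>"
    and dbl: "\<forall>r\<in>{0<..R}. \<forall>x. emeasure \<mu> (cball x (2*r)) \<le> ennreal D * emeasure \<mu> (cball x r)"
  shows "0 < s \<Longrightarrow> s \<le> 2^k * r \<Longrightarrow> s \<le> 2*R \<Longrightarrow>
     emeasure \<mu> (cball x s) \<le> ennreal D ^ k * emeasure \<mu> (cball x r)"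
proof (induction k arbitrary: s)
  case 0
  then show ?case using sets by (auto intro!: emeasure_mono)
next
  case (Suc k)
  have "emeasure \<mu> (cball x s) = emeasure \<mu> (cball x (2*(s/2)))" by simp
  also have "\<dots> \<le> ennreal D * emeasure \<mu> (cball x (s/2))"
  proof -
    have "s/2 \<in> {0<..R}" using Suc.prems by auto
    then show ?thesis using dbl by blast
  qed
  also have "\<dots> \<le> ennreal D * (ennreal D ^ k * emeasure \<mu> (cball x r))"
    using Suc.IH[of "s/2"] Suc.prems by (intro mult_left_mono) auto
  finally show ?case by (simp add: mult.assoc)
qed

lemma ss_dbl:
  assumes "standing_setting \<mu> p" "R > 0"
  shows "\<exists>D\<ge>1. \<forall>r\<in>{0<..R}. \<forall>x. emeasure \<mu> (cball x (2*r)) \<le> ennreal D * emeasure \<mu> (cball x r)"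
proof -
  obtain D where D: "\<forall>r\<in>{0<..R}. \<forall>x. emeasure \<mu> (cball x (2*r)) \<le> ennreal D * emeasure \<mu> (cball x r)"
    using assms unfolding standing_setting_def by meson
  show ?thesis
  proof (intro exI[of _ "max D 1"] conjI ballI allI)
    fix r x assume "r \<in> {0<..R}"
    then have "emeasure \<mu> (cball x (2*r)) \<le> ennreal D * emeasure \<mu> (cball x r)" using D by auto
    also have "\<dots> \<le> ennreal (max D 1) * emeasure \<mu> (cball x r)"
      by (intro mult_right_mono) auto
    finally show "emeasure \<mu> (cball x (2*r)) \<le> ennreal (max D 1) * emeasure \<mu> (cball x r)" .
  qed auto
qed

lemma ss_finite:
  assumes ss: "standing_setting \<mu> p"
  shows "emeasure \<mu> (cball x R) < \<infinity>"
proof -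
  obtain r0 where r0: "r0 > 0" "emeasure \<mu> (cball x r0) < \<infinity>"
    using ss unfolding standing_setting_def by meson
  show ?thesis
  proof (cases "R \<le> r0")
    case True
    then have "emeasure \<mu> (cball x R) \<le> emeasure \<mu> (cball x r0)"
      using ss_cball_sets[OF ss] by (intro emeasure_mono) auto
    then show ?thesis using r0 by auto
  next
    case False
    then have R: "R > 0" using r0 by auto
    obtain D where D: "\<forall>r\<in>{0<..R}. \<forall>x. emeasure \<mu> (cball x (2*r)) \<le> ennreal D * emeasure \<mu> (cball x r)"
      using ss_dbl[OF ss R] by blast
    obtain k where k: "R / r0 < 2^k" using real_arch_pow[of 2 "R/r0"] by auto
    then have "R \<le> 2^k * r0" using r0 by (simp add: field_simps)
    then have "emeasure \<mu> (cball x R) \<le> ennreal D ^ k * emeasure \<mu> (cball x r0)"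
      using doubling_iter[OF ss_cball_sets[OF ss] D] R by auto
    also have "\<dots> < \<infinity>"
    proof -
      have "ennreal D ^ k < \<infinity>" by (simp add: power_less_top_ennreal)
      then show ?thesis using r0 by (simp add: ennreal_mult_less_top)
    qed
    finally show ?thesis .
  qed
qed

lemma ss_pos:
  assumes ss: "standing_setting \<mu> p" and "r > 0"
  shows "emeasure \<mu> (cball x r) > 0"
proof -
  have "emeasure \<mu> (ball x r) > 0"
    using ss assms(2) unfolding standing_setting_def by auto
  also have "\<dots> \<le> emeasure \<mu> (cball x r)"
    using ss_cball_sets[OF ss] ss_sets[OF ss] by (intro emeasure_mono) auto
  finally show ?thesis .
qed

lemma pow_enn_mono:
  assumes "p > 0" "s \<le> t"
  shows "pow_enn p s \<le> pow_enn p t"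
proof (cases "t = \<infinity>")
  case True then show ?thesis by (simp add: pow_enn_def)
next
  case False
  then have "s \<noteq> \<infinity>" using assms(2) by (auto simp: top_unique[symmetric])
  moreover have "enn2real s \<le> enn2real t" using assms(2) False by (simp add: enn2real_mono top.not_eq_extremum)
  ultimately show ?thesis using False assms(1)
    by (auto simp: pow_enn_def intro!: ennreal_leI powr_mono2)
qed

lemma pow_enn_mult:
  assumes "p > 0" "a \<ge> 0"
  shows "pow_enn p (ennreal a * t) = ennreal (a powr p) * pow_enn p t"
proof (cases "t = \<infinity>")
  case True
  show ?thesis
  proof (cases "a = 0")
    case True then show ?thesis using \<open>t = \<infinity>\<close> by (simp add: pow_enn_def)
  next
    case False
    then have "a > 0" using assms by auto
    then show ?thesis using \<open>t = \<infinity>\<close> by (simp add: pow_enn_def ennreal_mult_top)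
  qed
next
  case False
  then have "ennreal a * t \<noteq> \<infinity>" by (simp add: ennreal_mult_eq_top_iff)
  moreover have "enn2real (ennreal a * t) = a * enn2real t" using assms by (simp add: enn2real_mult)
  ultimately show ?thesis using False assms
    by (simp add: pow_enn_def powr_mult ennreal_mult[symmetric])
qed

lemma le_mult_INF:
  fixes a k :: ennreal
  assumes "I \<noteq> {}" "k < \<infinity>" "\<And>i. i \<in> I \<Longrightarrow> a \<le> k * f i"
  shows "a \<le> k * (INF i\<in>I. f i)"
proof (cases "k = 0")
  case True
  then show ?thesis using assms by auto
next
  case False
  then have kp: "k > 0" by (simp add: zero_less_iff_neq_zero)
  have "a / k \<le> (INF i\<in>I. f i)"
    using assms(3) by (intro INF_greatest divide_le_posI_ennreal[OF kp]) auto
  then have "k * (a / k) \<le> k * (INF i\<in>I. f i)" by (rule mult_left_mono) auto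
  moreover have "k * (a / k) = a"
    using False assms(2) by (simp add: ennreal_times_divide ennreal_mult_divide_eq mult.commute)
  ultimately show ?thesis by simp
qed

lemma mean_osc_compare:
  fixes \<nu> :: "'a measure"
  assumes G: "G \<in> sets \<nu>" and H: "H \<in> sets \<nu>" and GH: "G \<subseteq> H"
    and pos: "emeasure \<nu> G > 0" and fin: "emeasure \<nu> H < \<infinity>"
    and le: "emeasure \<nu> H \<le> ennreal L * emeasure \<nu> G"
  shows "mean_osc \<nu> f G \<le> ennreal L * mean_osc \<nu> f H"
proof -
  have HG: "emeasure \<nu> G \<le> emeasure \<nu> H" using GH H by (intro emeasure_mono)
  then have posH: "emeasure \<nu> H > 0" using pos by auto
  have finG: "emeasure \<nu> G < \<infinity>" using HG fin by auto
  define F where "F c = (\<integral>\<^sup>+ y. ennreal \<bar>f y - c\<bar> * indicator G y \<partial>\<nu>)" for c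
  define FH where "FH c = (\<integral>\<^sup>+ y. ennreal \<bar>f y - c\<bar> * indicator H y \<partial>\<nu>)" for c
  have MG: "mean_osc \<nu> f G = (INF c. F c / emeasure \<nu> G)"
    using pos unfolding mean_osc_def F_def by auto
  have MH: "mean_osc \<nu> f H = (INF c. FH c / emeasure \<nu> H)"
    using posH unfolding mean_osc_def FH_def by auto
  have "(INF c. F c / emeasure \<nu> G) \<le> ennreal L * (INF c. FH c / emeasure \<nu> H)"
  proof (rule le_mult_INF)
    fix c :: real
    assume "c \<in> UNIV"
    have "F c \<le> FH c" unfolding F_def FH_def
      using GH by (intro nn_integral_mono) (auto intro!: mult_left_mono simp: indicator_def)
    also have "FH c = (FH c / emeasure \<nu> H) * emeasure \<nu> H"
      using posH fin by (simp add: ennreal_divide_times)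
    also have "\<dots> \<le> (FH c / emeasure \<nu> H) * (ennreal L * emeasure \<nu> G)"
      by (intro mult_left_mono le) auto
    finally have "F c \<le> (ennreal L * (FH c / emeasure \<nu> H)) * emeasure \<nu> G"
      by (simp add: ac_simps)
    then have "F c / emeasure \<nu> G \<le> ennreal L * (FH c / emeasure \<nu> H)"
      using pos finG
      by (metis divide_le_posI_ennreal mult.commute)
    then show "(INF c. F c / emeasure \<nu> G) \<le> ennreal L * (FH c / emeasure \<nu> H)"
      by (meson INF_lower2 UNIV_I)
  qed auto
  then show ?thesis using MG MH by simp
qed

lemma layer_cake_fin:
  fixes w :: "nat \<Rightarrow> ennreal" and t :: "nat \<Rightarrow> real" and A :: "nat \<Rightarrow> 'a set"
  assumes "finite I" and As: "\<And>i. i \<in> I \<Longrightarrow> A i \<in> sets M" and tnn: "\<And>i. i \<in> I \<Longrightarrow> t i \<ge> 0"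
    and pack: "\<And>J. J \<subseteq> I \<Longrightarrow> (\<Sum>i\<in>J. w i) \<le> Cp * emeasure M (\<Union>i\<in>J. A i)"
    and g: "g \<in> borel_measurable M" and gt: "\<And>i z. i \<in> I \<Longrightarrow> z \<in> A i \<Longrightarrow> ennreal (t i) \<le> g z"
  shows "(\<Sum>i\<in>I. w i * ennreal (t i)) \<le> Cp * (\<integral>\<^sup>+ z. g z \<partial>M)"
  using assms
proof (induction "card I" arbitrary: I t g rule: less_induct)
  case less
  show ?case
  proof (cases "I = {}")
    case True then show ?thesis by simp
  next
    case False
    define m where "m = Min (t ` I)"
    have "m \<in> t ` I" unfolding m_def using less.prems False by (intro Min_in) auto
    then obtain i0 where i0: "i0 \<in> I" "t i0 = m" by auto
    have mle: "\<And>i. i \<in> I \<Longrightarrow> m \<le> t i" unfolding m_def using less.prems by auto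
    have m0: "m \<ge> 0" using i0 less.prems by auto
    define U where "U = (\<Union>i\<in>I. A i)"
    have U: "U \<in> sets M" unfolding U_def using less.prems by auto
    define I' where "I' = I - {i0}"
    define t' where "t' i = t i - m" for i
    define g' where "g' z = g z - ennreal m * indicator U z" for z
    have g'm: "g' \<in> borel_measurable M" unfolding g'_def using less.prems U by measurable
    have cardI': "card I' < card I" unfolding I'_def using i0 less.prems by (meson card_Diff1_less)
    have IH: "(\<Sum>i\<in>I'. w i * ennreal (t' i)) \<le> Cp * (\<integral>\<^sup>+ z. g' z \<partial>M)"
    proof (rule less.hyps[OF cardI'])
      show "finite I'" unfolding I'_def using less.prems by auto
      show "\<And>i. i \<in> I' \<Longrightarrow> A i \<in> sets M" unfolding I'_def using less.prems by auto
      show "\<And>i. i \<in> I' \<Longrightarrow> 0 \<le> t' i" unfolding I'_def t'_def using mle by auto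
      show "\<And>J. J \<subseteq> I' \<Longrightarrow> (\<Sum>i\<in>J. w i) \<le> Cp * emeasure M (\<Union>i\<in>J. A i)"
        unfolding I'_def using less.prems(4) by blast
      show "g' \<in> borel_measurable M" by (rule g'm)
      fix i z assume iz: "i \<in> I'" "z \<in> A i"
      then have zU: "z \<in> U" unfolding U_def I'_def by auto
      have "ennreal (t' i) = ennreal (t i) - ennreal m" unfolding t'_def using m0 by (simp add: ennreal_minus)
      also have "\<dots> \<le> g z - ennreal m" using less.prems iz unfolding I'_def by (intro ennreal_minus_mono) auto
      finally show "ennreal (t' i) \<le> g' z" unfolding g'_def using zU by simp
    qed
    have split: "\<And>i. i \<in> I \<Longrightarrow> ennreal (t i) = ennreal m + ennreal (t' i)"
      unfolding t'_def using mle m0 by (simp add: ennreal_plus[symmetric])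
    have e1: "(\<Sum>i\<in>I. w i * ennreal (t i)) = (\<Sum>i\<in>I. ennreal m * w i) + (\<Sum>i\<in>I. w i * ennreal (t' i))"
      using split by (simp add: distrib_left sum.distrib mult.commute)
    have e2: "(\<Sum>i\<in>I. w i * ennreal (t' i)) = (\<Sum>i\<in>I'. w i * ennreal (t' i))"
    proof -
      have "(\<Sum>i\<in>I. w i * ennreal (t' i)) = w i0 * ennreal (t' i0) + (\<Sum>i\<in>I'. w i * ennreal (t' i))"
        unfolding I'_def using i0 less.prems by (simp add: sum.remove)
      then show ?thesis using i0 unfolding t'_def by simp
    qed
    have e3: "(\<Sum>i\<in>I. ennreal m * w i) \<le> ennreal m * (Cp * emeasure M U)"
      unfolding U_def sum_distrib_left[symmetric] using less.prems by (intro mult_left_mono) auto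
    have "(\<Sum>i\<in>I. w i * ennreal (t i)) \<le> ennreal m * (Cp * emeasure M U) + Cp * (\<integral>\<^sup>+ z. g' z \<partial>M)"
      unfolding e1 e2 using e3 IH by (rule add_mono)
    also have "\<dots> = Cp * (ennreal m * emeasure M U + (\<integral>\<^sup>+ z. g' z \<partial>M))"
      by (simp add: distrib_left mult.left_commute)
    also have "ennreal m * emeasure M U + (\<integral>\<^sup>+ z. g' z \<partial>M) = (\<integral>\<^sup>+ z. g' z + ennreal m * indicator U z \<partial>M)"
      using U g'm by (simp add: nn_integral_add nn_integral_cmult_indicator add.commute)
    also have "(\<integral>\<^sup>+ z. g' z + ennreal m * indicator U z \<partial>M) = (\<integral>\<^sup>+ z. g z \<partial>M)"
    proof (intro nn_integral_cong)
      fix z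
      have "ennreal m * indicator U z \<le> g z"
      proof (cases "z \<in> U")
        case True
        then obtain i where "i \<in> I" "z \<in> A i" unfolding U_def by auto
        then have "ennreal (t i) \<le> g z" using less.prems by auto
        moreover have "ennreal m \<le> ennreal (t i)" using mle[OF \<open>i \<in> I\<close>] by (rule ennreal_leI)
        ultimately show ?thesis using True by simp
      qed simp
      then show "g' z + ennreal m * indicator U z = g z" unfolding g'_def
        by (rule diff_add_cancel_ennreal)
    qed
    finally show ?thesis .
  qed
qed

lemma infdist_ge_aux:
  fixes K :: "'a::metric_space set"
  assumes "K \<noteq> {}" "K \<subseteq> cball y r"
  shows "dist z y - r \<le> infdist z K"
proof -
  have "dist z y - r \<le> (INF a\<in>K. dist z a)"
  proof (rule cINF_greatest)
    show "K \<noteq> {}" by fact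
    fix a assume "a \<in> K"
    then have "dist a y \<le> r" using assms by (auto simp: dist_commute)
    then show "dist z y - r \<le> dist z a" using dist_triangle[of z y a] by (simp add: dist_commute)
  qed
  then show ?thesis using assms by (simp add: infdist_def)
qed

lemma sep_exists:
  fixes \<mu> :: "'a::polish_space measure" and K :: "'a set"
  assumes ss: "standing_setting \<mu> p"
    and dbl: "\<forall>r\<in>{0<..2}. \<forall>x. emeasure \<mu> (cball x (2*r)) \<le> ennreal D * emeasure \<mu> (cball x r)"
    and K: "K \<subseteq> cball y r" and r: "0 < r" "r \<le> 1" and rho: "0 < \<rho>"
  shows "\<exists>F. finite F \<and> F \<subseteq> K \<and> (\<forall>x\<in>F. \<forall>x'\<in>F. x \<noteq> x' \<longrightarrow> \<rho> < dist x x')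
             \<and> (\<forall>z\<in>K. \<exists>x\<in>F. dist z x \<le> \<rho>)"
proof -
  define P where "P F \<longleftrightarrow> finite F \<and> F \<subseteq> K \<and> (\<forall>x\<in>F. \<forall>x'\<in>F. x \<noteq> x' \<longrightarrow> \<rho> < dist x x')" for F
  obtain k :: nat where k: "4*r/\<rho> < 2^k" using real_arch_pow[of 2 "4*r/\<rho>"] by auto
  then have k': "2*r \<le> 2^k * (\<rho>/2)" using rho by (simp add: field_simps)
  define a where "a = emeasure \<mu> (cball y r)"
  have apos: "a > 0" unfolding a_def using ss_pos[OF ss r(1)] .
  have afin: "a < \<infinity>" unfolding a_def using ss_finite[OF ss] .
  define Bg where "Bg = ennreal D ^ k * emeasure \<mu> (cball y (r + \<rho>))"
  have Bgfin: "Bg < \<infinity>" unfolding Bg_def using ss_finite[OF ss]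
    by (simp add: ennreal_mult_less_top power_less_top_ennreal)
  have lower: "a \<le> ennreal D ^ k * emeasure \<mu> (cball x (\<rho>/2))" if "x \<in> K" for x
  proof -
    have "cball y r \<subseteq> cball x (2*r)"
    proof
      fix z assume "z \<in> cball y r"
      moreover have "dist y x \<le> r" using that K by auto
      ultimately show "z \<in> cball x (2*r)" using dist_triangle[of x z y] by (auto simp: dist_commute)
    qed
    then have "a \<le> emeasure \<mu> (cball x (2*r))" unfolding a_def using ss_cball_sets[OF ss] by (intro emeasure_mono) auto
    also have "\<dots> \<le> ennreal D ^ k * emeasure \<mu> (cball x (\<rho>/2))"
      using doubling_iter[OF ss_cball_sets[OF ss] dbl, of "2*r" k "\<rho>/2"] k' r by auto
    finally show ?thesis .
  qed
  have bound: "card F < nat \<lceil>enn2real Bg / enn2real a\<rceil> + 1" if PF: "P F" for F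
  proof -
    have disj: "disjoint_family_on (\<lambda>x. cball x (\<rho>/2)) F"
      unfolding disjoint_family_on_def
    proof (intro ballI impI)
      fix x x' assume "x \<in> F" "x' \<in> F" "x \<noteq> x'"
      then have "\<rho> < dist x x'" using PF unfolding P_def by auto
      show "cball x (\<rho>/2) \<inter> cball x' (\<rho>/2) = {}"
      proof (rule ccontr)
        assume "cball x (\<rho>/2) \<inter> cball x' (\<rho>/2) \<noteq> {}"
        then obtain z where "dist x z \<le> \<rho>/2" "dist x' z \<le> \<rho>/2" by auto
        then show False using \<open>\<rho> < dist x x'\<close> dist_triangle[of x x' z] by (simp add: dist_commute)
      qed
    qed
    have "of_nat (card F) * a = (\<Sum>x\<in>F. a)" by simp
    also have "\<dots> \<le> (\<Sum>x\<in>F. ennreal D ^ k * emeasure \<mu> (cball x (\<rho>/2)))"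
      using PF lower unfolding P_def by (intro sum_mono) auto
    also have "\<dots> = ennreal D ^ k * emeasure \<mu> (\<Union>x\<in>F. cball x (\<rho>/2))"
      using PF disj ss_cball_sets[OF ss] unfolding P_def
      by (simp add: sum_distrib_left[symmetric] sum_emeasure image_subset_iff)
    also have "\<dots> \<le> Bg" unfolding Bg_def
    proof (intro mult_left_mono emeasure_mono)
      show "(\<Union>x\<in>F. cball x (\<rho>/2)) \<subseteq> cball y (r + \<rho>)"
      proof
        fix z assume "z \<in> (\<Union>x\<in>F. cball x (\<rho>/2))"
        then obtain x where "x \<in> F" "dist x z \<le> \<rho>/2" by auto
        moreover have "dist y x \<le> r" using \<open>x \<in> F\<close> PF K unfolding P_def by auto
        ultimately show "z \<in> cball y (r + \<rho>)" using dist_triangle[of y z x] rho by auto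
      qed
    qed (auto simp: ss_cball_sets[OF ss])
    finally have le: "of_nat (card F) * a \<le> Bg" .
    have "real (card F) * enn2real a \<le> enn2real Bg"
    proof -
      have "ennreal (real (card F) * enn2real a) = of_nat (card F) * a"
        using afin by (simp add: ennreal_mult ennreal_of_nat_eq_real_of_nat)
      moreover have "enn2real (of_nat (card F) * a) \<le> enn2real Bg"
        using le Bgfin by (intro enn2real_mono) auto
      moreover have "real (card F) * enn2real a \<ge> 0" by simp
      ultimately show ?thesis by (metis enn2real_ennreal)
    qed
    moreover have "enn2real a > 0" using apos afin by (simp add: enn2real_positive_iff)
    ultimately have "real (card F) \<le> enn2real Bg / enn2real a" by (simp add: field_simps)
    then have "real (card F) \<le> real (nat \<lceil>enn2real Bg / enn2real a\<rceil>)" by linarith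
    then show ?thesis by simp
  qed
  have "P {}" unfolding P_def by auto
  define N where "N = nat \<lceil>enn2real Bg / enn2real a\<rceil> + 1"
  have bound': "\<forall>F. P F \<longrightarrow> card F < N" using bound unfolding N_def by blast
  obtain F where F: "P F" and Fmax: "\<And>F'. P F' \<Longrightarrow> card F' \<le> card F"
    using ex_has_greatest_nat[of P "{}" card N, OF \<open>P {}\<close> bound'] by blast
  have cover: "\<forall>z\<in>K. \<exists>x\<in>F. dist z x \<le> \<rho>"
  proof (rule ccontr)
    assume "\<not> ?thesis"
    then obtain z where z: "z \<in> K" "\<And>x. x \<in> F \<Longrightarrow> \<rho> < dist z x" by (auto simp: not_le)
    have zF: "z \<notin> F"
    proof
      assume "z \<in> F"
      then have "\<rho> < dist z z" by (rule z(2))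
      then show False using rho by simp
    qed
    have "P (insert z F)" unfolding P_def
    proof (intro conjI ballI impI)
      show "finite (insert z F)" using F unfolding P_def by simp
      show "insert z F \<subseteq> K" using F z(1) unfolding P_def by simp
      fix x x' assume xx: "x \<in> insert z F" "x' \<in> insert z F" "x \<noteq> x'"
      show "\<rho> < dist x x'"
        using xx F z(2)[of x] z(2)[of x'] unfolding P_def by (auto simp add: dist_commute)
    qed
    then have "card (insert z F) \<le> card F" by (rule Fmax)
    then show False using zF F unfolding P_def by simp
  qed
  have "finite F" "F \<subseteq> K" "\<forall>x\<in>F. \<forall>x'\<in>F. x \<noteq> x' \<longrightarrow> \<rho> < dist x x'"
    using F unfolding P_def by auto
  then show ?thesis using cover by blast
qed

lemma H0_delta_cover:
  fixes \<mu> :: "'a::metric_space measure"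
  assumes "finite F" "K \<subseteq> (\<Union>x\<in>F. cball x \<rho>)" "0 < \<rho>" "\<rho> < \<delta>"
  shows "H0_delta \<mu> \<delta> K \<le> (\<Sum>x\<in>F. emeasure \<mu> (cball x \<rho>))"
proof -
  obtain h where h: "bij_betw h {0..<card F} F" using ex_bij_betw_nat_finite[OF assms(1)] by blast
  define I where "I = {..<card F}"
  have mem: "(I, h, (\<lambda>_. \<rho>)) \<in> {(I, xs, rs). I \<subseteq> (UNIV::nat set)
        \<and> (\<forall>i\<in>I. 0 < rs i \<and> rs i < \<delta>) \<and> K \<subseteq> (\<Union>i\<in>I. cball (xs i) (rs i))}"
  proof -
    have "h ` I = F" using h unfolding I_def bij_betw_def by (simp add: atLeast0LessThan)
    then have "(\<Union>i\<in>I. cball (h i) \<rho>) = (\<Union>x\<in>F. cball x \<rho>)" by auto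
    then show ?thesis using assms by auto
  qed
  have "H0_delta \<mu> \<delta> K \<le> (case (I, h, (\<lambda>_. \<rho>)) of (I, xs, rs) \<Rightarrow>
        (\<Sum>i. (if i \<in> I then emeasure \<mu> (cball (xs i) (rs i)) else 0)))"
    unfolding H0_delta_def by (rule INF_lower[OF mem])
  also have "\<dots> = (\<Sum>i. (if i \<in> I then emeasure \<mu> (cball (h i) \<rho>) else 0))" by simp
  also have "\<dots> = (\<Sum>i\<in>I. (if i \<in> I then emeasure \<mu> (cball (h i) \<rho>) else 0))"
    by (rule suminf_finite) (auto simp: I_def)
  also have "\<dots> = (\<Sum>i\<in>{0..<card F}. emeasure \<mu> (cball (h i) \<rho>))"
    by (simp add: I_def atLeast0LessThan)
  also have "\<dots> = (\<Sum>x\<in>F. emeasure \<mu> (cball x \<rho>))"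
    using sum.reindex_bij_betw[OF h, of "\<lambda>x. emeasure \<mu> (cball x \<rho>)"] by simp
  finally show ?thesis .
qed

lemma H0_bound:
  fixes \<mu> :: "'a::polish_space measure" and K :: "'a set"
  assumes ss: "standing_setting \<mu> p"
    and dbl: "\<forall>r\<in>{0<..2}. \<forall>x. emeasure \<mu> (cball x (2*r)) \<le> ennreal D * emeasure \<mu> (cball x r)"
    and D: "D \<ge> 1"
    and K: "K \<subseteq> cball y r" "closed K" "K \<noteq> {}" and r: "0 < r" "r \<le> 1"
  shows "H0 \<mu> K \<le> ennreal D * emeasure \<mu> K"
  unfolding H0_def
proof (rule SUP_least)
  fix \<delta> :: real assume "\<delta> \<in> {0<..}"
  then have \<delta>: "\<delta> > 0" by simp
  obtain N :: nat where N: "2/\<delta> < N" using reals_Archimedean2 by blast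
  have "0 < 2/\<delta>" using \<delta> by simp
  then have "real N > 0" using N by linarith
  then have Npos: "N > 0" by simp
  define T where "T n = {z. infdist z K \<le> 1 / (real n + real N)}" for n
  have Tclosed: "closed (T n)" for n
    unfolding T_def by (intro closed_Collect_le continuous_on_infdist continuous_intros)
  have Tsets: "T n \<in> sets \<mu>" for n using ss_closed_sets[OF ss Tclosed] .
  have Tsub: "T n \<subseteq> cball y (r + 1)" for n
  proof
    fix z assume "z \<in> T n"
    then have "infdist z K \<le> 1 / (real n + real N)" unfolding T_def by simp
    also have "\<dots> \<le> 1" using Npos by (simp add: field_simps)
    finally show "z \<in> cball y (r + 1)" using infdist_ge_aux[OF K(3) K(1), of z] by (simp add: dist_commute)
  qed
  have Tfin: "emeasure \<mu> (T n) \<noteq> \<infinity>" for n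
  proof -
    have "emeasure \<mu> (T n) \<le> emeasure \<mu> (cball y (r+1))"
      using Tsub ss_cball_sets[OF ss] by (intro emeasure_mono) auto
    then show ?thesis using ss_finite[OF ss, of y "r+1"] by auto
  qed
  have Tanti: "antimono T"
  proof (rule antimonoI, rule subsetI)
    fix m n :: nat and z assume "m \<le> n" "z \<in> T n"
    then have "infdist z K \<le> 1 / (real n + real N)" unfolding T_def by simp
    moreover have "1 / (real n + real N) \<le> 1 / (real m + real N)"
      using Npos \<open>m \<le> n\<close> by (intro divide_left_mono) auto
    ultimately show "z \<in> T m" unfolding T_def by simp
  qed
  have Tint: "(\<Inter>n. T n) = K"
  proof
    show "K \<subseteq> (\<Inter>n. T n)" unfolding T_def using Npos by (auto simp: infdist_zero intro: divide_nonneg_nonneg)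
    show "(\<Inter>n. T n) \<subseteq> K"
    proof
      fix z assume z: "z \<in> (\<Inter>n. T n)"
      have "infdist z K \<le> 0"
      proof (rule field_le_epsilon)
        fix e :: real assume "e > 0"
        obtain n :: nat where "1/e < n" using reals_Archimedean2 by blast
        then have "1 < real n * e" using \<open>e > 0\<close> by (simp add: field_simps)
        moreover have "real n * e \<le> (real n + real N) * e" using \<open>e > 0\<close> by (intro mult_right_mono) auto
        ultimately have "1 \<le> (real n + real N) * e" by linarith
        moreover have "real n + real N > 0" using Npos by simp
        ultimately have "1 / (real n + real N) \<le> e" by (simp add: divide_le_eq mult.commute)
        moreover have "infdist z K \<le> 1 / (real n + real N)" using z unfolding T_def by auto
        ultimately show "infdist z K \<le> 0 + e" by simp
      qed
      then have "infdist z K = 0" using infdist_nonneg[of z K] by linarith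
      then have "z \<in> closure K" using in_closure_iff_infdist_zero[OF K(3)] by simp
      then show "z \<in> K" using K(2) by (simp add: closure_closed)
    qed
  qed
  have bnd: "H0_delta \<mu> \<delta> K \<le> ennreal D * emeasure \<mu> (T n)" for n
  proof -
    define \<rho> where "\<rho> = 2 / (real n + real N)"
    have \<rho>: "0 < \<rho>" "\<rho> < \<delta>" "\<rho> \<le> 2"
    proof -
      show "0 < \<rho>" unfolding \<rho>_def using Npos by simp
      have "2 / (real n + real N) \<le> 2 / real N" using Npos by (intro divide_left_mono) auto
      also have "2 / real N < \<delta>" using N \<delta> Npos by (simp add: field_simps)
      finally show "\<rho> < \<delta>" unfolding \<rho>_def .
      have "real n + real N \<ge> 1" using Npos by linarith
      then show "\<rho> \<le> 2" unfolding \<rho>_def by (simp add: field_simps)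
    qed
    obtain F where F: "finite F" "F \<subseteq> K" "\<forall>x\<in>F. \<forall>x'\<in>F. x \<noteq> x' \<longrightarrow> \<rho> < dist x x'"
      "\<forall>z\<in>K. \<exists>x\<in>F. dist z x \<le> \<rho>"
      using sep_exists[OF ss dbl K(1) r \<rho>(1)] by blast
    have cov: "K \<subseteq> (\<Union>x\<in>F. cball x \<rho>)"
    proof
      fix z assume "z \<in> K"
      then obtain x where "x \<in> F" "dist z x \<le> \<rho>" using F(4) by blast
      then show "z \<in> (\<Union>x\<in>F. cball x \<rho>)" by (auto simp: dist_commute)
    qed
    have "H0_delta \<mu> \<delta> K \<le> (\<Sum>x\<in>F. emeasure \<mu> (cball x \<rho>))"
      by (rule H0_delta_cover[OF F(1) cov \<rho>(1,2)])
    also have "\<dots> \<le> (\<Sum>x\<in>F. ennreal D * emeasure \<mu> (cball x (\<rho>/2)))"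
    proof (rule sum_mono)
      fix x assume "x \<in> F"
      have "\<rho>/2 \<in> {0<..2}" using \<rho> by auto
      then have "emeasure \<mu> (cball x (2*(\<rho>/2))) \<le> ennreal D * emeasure \<mu> (cball x (\<rho>/2))"
        using dbl by blast
      then show "emeasure \<mu> (cball x \<rho>) \<le> ennreal D * emeasure \<mu> (cball x (\<rho>/2))" by simp
    qed
    also have "\<dots> = ennreal D * emeasure \<mu> (\<Union>x\<in>F. cball x (\<rho>/2))"
    proof -
      have disj: "disjoint_family_on (\<lambda>x. cball x (\<rho>/2)) F"
        unfolding disjoint_family_on_def
      proof (intro ballI impI)
        fix x x' assume "x \<in> F" "x' \<in> F" "x \<noteq> x'"
        then have "\<rho> < dist x x'" using F(3) by auto
        show "cball x (\<rho>/2) \<inter> cball x' (\<rho>/2) = {}"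
        proof (rule ccontr)
          assume "cball x (\<rho>/2) \<inter> cball x' (\<rho>/2) \<noteq> {}"
          then obtain z where "dist x z \<le> \<rho>/2" "dist x' z \<le> \<rho>/2" by auto
          then show False using \<open>\<rho> < dist x x'\<close> dist_triangle[of x x' z] by (simp add: dist_commute)
        qed
      qed
      show ?thesis using F(1) disj ss_cball_sets[OF ss]
        by (simp add: sum_distrib_left[symmetric] sum_emeasure image_subset_iff)
    qed
    also have "\<dots> \<le> ennreal D * emeasure \<mu> (T n)"
    proof (intro mult_left_mono emeasure_mono)
      show "(\<Union>x\<in>F. cball x (\<rho>/2)) \<subseteq> T n"
      proof
        fix z assume "z \<in> (\<Union>x\<in>F. cball x (\<rho>/2))"
        then obtain x where "x \<in> F" "dist x z \<le> \<rho>/2" by auto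
        then have "infdist z K \<le> dist z x" using F(2) by (intro infdist_le) auto
        also have "\<dots> \<le> \<rho>/2" using \<open>dist x z \<le> \<rho>/2\<close> by (simp add: dist_commute)
        also have "\<rho>/2 = 1 / (real n + real N)" unfolding \<rho>_def using Npos by (simp add: field_simps)
        finally show "z \<in> T n" unfolding T_def by simp
      qed
    qed (auto simp: Tsets)
    finally show ?thesis .
  qed
  have "H0_delta \<mu> \<delta> K \<le> ennreal D * (INF n. emeasure \<mu> (T n))"
    by (rule le_mult_INF) (use bnd in auto)
  also have "(INF n. emeasure \<mu> (T n)) = emeasure \<mu> K"
    using INF_emeasure_decseq[of T \<mu>] Tsets Tanti Tfin Tint by auto
  finally show "H0_delta \<mu> \<delta> K \<le> ennreal D * emeasure \<mu> K" .
qed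

lemma lower_density:
  fixes \<mu> :: "'a::polish_space measure"
  assumes ss: "standing_setting \<mu> p" and adr: "ADR0 \<mu> S"
    and dbl: "\<forall>r\<in>{0<..2}. \<forall>x. emeasure \<mu> (cball x (2*r)) \<le> ennreal D * emeasure \<mu> (cball x r)"
    and D: "D \<ge> 1"
  shows "\<exists>L>0. \<forall>y\<in>S. \<forall>r::real. 0 < r \<and> r \<le> 1 \<longrightarrow>
      emeasure \<mu> (cball y r) \<le> ennreal L * emeasure \<mu> (cball y r \<inter> S)"
proof -
  obtain k1 where S: "closed S" and k1: "k1 > 0"
    and adr': "\<forall>x\<in>S. \<forall>r\<in>{0<..1}. ennreal k1 * emeasure \<mu> (cball x r) \<le> H0 \<mu> (cball x r \<inter> S)"
    using adr unfolding ADR0_def by blast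
  show ?thesis
  proof (intro exI[of _ "D / k1"] conjI ballI allI impI)
    show "D / k1 > 0" using D k1 by simp
    fix y and r :: real assume y: "y \<in> S" and r': "0 < r \<and> r \<le> 1"
    then have r: "0 < r" "r \<le> 1" by auto
    have "ennreal k1 * emeasure \<mu> (cball y r) \<le> H0 \<mu> (cball y r \<inter> S)" using adr' y r by auto
    also have "\<dots> \<le> ennreal D * emeasure \<mu> (cball y r \<inter> S)"
    proof -
      have "closed (cball y r \<inter> S)" using S by (simp add: closed_Int)
      moreover have "y \<in> cball y r \<inter> S" using y r by simp
      then have "cball y r \<inter> S \<noteq> {}" by blast
      ultimately show ?thesis using H0_bound[OF ss dbl D, of "cball y r \<inter> S" y r] r by auto
    qed
    finally have *: "ennreal k1 * emeasure \<mu> (cball y r) \<le> ennreal D * emeasure \<mu> (cball y r \<inter> S)" .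
    have "emeasure \<mu> (cball y r) = ennreal (1/k1) * (ennreal k1 * emeasure \<mu> (cball y r))"
      using k1 by (simp add: mult.assoc[symmetric] ennreal_mult[symmetric])
    also have "\<dots> \<le> ennreal (1/k1) * (ennreal D * emeasure \<mu> (cball y r \<inter> S))"
      by (intro mult_left_mono *) auto
    also have "\<dots> = ennreal (D / k1) * emeasure \<mu> (cball y r \<inter> S)"
      using k1 D by (simp add: mult.assoc[symmetric] ennreal_mult[symmetric])
    finally show "emeasure \<mu> (cball y r) \<le> ennreal (D / k1) * emeasure \<mu> (cball y r \<inter> S)" .
  qed
qed

lemma nu_eq:
  assumes "S \<in> sets \<mu>" "A \<in> sets \<mu>"
  shows "emeasure (mrestr \<mu> S) A = emeasure \<mu> (A \<inter> S)"
proof -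
  have "emeasure (mrestr \<mu> S) A = (\<integral>\<^sup>+ x. indicator S x * indicator A x \<partial>\<mu>)"
    unfolding mrestr_def using assms by (simp add: emeasure_density)
  also have "\<dots> = (\<integral>\<^sup>+ x. indicator (A \<inter> S) x \<partial>\<mu>)"
    by (intro nn_integral_cong) (auto split: split_indicator)
  also have "\<dots> = emeasure \<mu> (A \<inter> S)" using assms by simp
  finally show ?thesis .
qed

lemma packing:
  fixes \<mu> :: "'a::metric_space measure" and M :: nat and rs :: "nat \<Rightarrow> real"
  assumes sets: "\<And>x r. cball x r \<in> sets \<mu>" and Ss: "S \<in> sets \<mu>"
    and c: "c \<ge> 1"
    and pos: "\<forall>i<M. rs i > 0"
    and disj: "\<forall>i<M. \<forall>j<M. i \<noteq> j \<longrightarrow> cball (xs i) (rs i) \<inter> cball (xs j) (rs j) = {}"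
    and near: "\<forall>i<M. dist (xs i) (ys i) \<le> c * rs i"
    and big: "\<forall>i<M. emeasure \<mu> (cball (ys i) (3*(c+1)*rs i)) \<le> ennreal \<Lambda> * emeasure \<mu> (cball (ys i) (rs i) \<inter> S)"
  shows "J \<subseteq> {..<M} \<Longrightarrow> (\<Sum>i\<in>J. emeasure \<mu> (cball (xs i) (rs i)))
           \<le> ennreal \<Lambda> * emeasure \<mu> (\<Union>i\<in>J. cball (ys i) (rs i) \<inter> S)"
proof (induction "card J" arbitrary: J rule: less_induct)
  case less
  have finJ: "finite J" using less.prems by (rule finite_subset) simp
  show ?case
  proof (cases "J = {}")
    case True then show ?thesis by simp
  next
    case False
    define r0 where "r0 = Max (rs ` J)"
    have "r0 \<in> rs ` J" unfolding r0_def using finJ False by (intro Max_in) auto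
    then obtain i0 where i0: "i0 \<in> J" "rs i0 = r0" by auto
    have rmax: "\<And>i. i \<in> J \<Longrightarrow> rs i \<le> r0" unfolding r0_def using finJ by auto
    define A where "A i = cball (ys i) (rs i) \<inter> S" for i
    define B where "B i = cball (xs i) (rs i)" for i
    define R0 where "R0 = {i\<in>J. dist (ys i) (ys i0) \<le> (c+1)*(rs i + rs i0)}"
    define J' where "J' = J - R0"
    have i0M: "i0 < M" using i0 less.prems by auto
    have ri0: "rs i0 > 0" using pos i0M by blast
    have "0 \<le> (c+1)*(rs i0 + rs i0)" using c ri0 by simp
    then have i0R: "i0 \<in> R0" unfolding R0_def using i0 by simp
    have R0J: "R0 \<subseteq> J" unfolding R0_def by auto
    have finR: "finite R0" using R0J finJ finite_subset by blast
    have "J' \<subset> J" unfolding J'_def using i0R i0 by blast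
    then have cardJ': "card J' < card J" using finJ by (rule psubset_card_mono[rotated])
    have J'sub: "J' \<subseteq> {..<M}" unfolding J'_def using less.prems by auto
    have IH: "(\<Sum>i\<in>J'. emeasure \<mu> (B i)) \<le> ennreal \<Lambda> * emeasure \<mu> (\<Union>i\<in>J'. A i)"
      unfolding A_def B_def using less.hyps[OF cardJ' J'sub] .
    have "(\<Sum>i\<in>R0. emeasure \<mu> (B i)) = emeasure \<mu> (\<Union>i\<in>R0. B i)"
    proof (rule sum_emeasure)
      show "B ` R0 \<subseteq> sets \<mu>" unfolding B_def using sets by auto
      show "disjoint_family_on B R0" unfolding disjoint_family_on_def B_def
        using disj R0J less.prems by blast
    qed (rule finR)
    also have "\<dots> \<le> emeasure \<mu> (cball (ys i0) (3*(c+1)*rs i0))"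
    proof (rule emeasure_mono)
      show "(\<Union>i\<in>R0. B i) \<subseteq> cball (ys i0) (3*(c+1)*rs i0)"
      proof
        fix w assume "w \<in> (\<Union>i\<in>R0. B i)"
        then obtain i where i: "i \<in> R0" "dist (xs i) w \<le> rs i" unfolding B_def by auto
        have iJ: "i \<in> J" using i R0J by auto
        have d1: "dist (ys i) (ys i0) \<le> (c+1)*(rs i + rs i0)" using i unfolding R0_def by auto
        have d2: "dist (xs i) (ys i) \<le> c * rs i" using near iJ less.prems by auto
        have ri: "rs i \<le> rs i0" using rmax iJ i0 by auto
        have "dist (ys i0) w \<le> dist (ys i0) (ys i) + dist (ys i) (xs i) + dist (xs i) w"
          using dist_triangle[of "ys i0" w "ys i"] dist_triangle[of "ys i" w "xs i"] by linarith
        also have "\<dots> \<le> (c+1)*(rs i + rs i0) + c * rs i + rs i"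
          using d1 d2 i(2) dist_commute[of "ys i0" "ys i"] dist_commute[of "ys i" "xs i"] by linarith
        also have "\<dots> \<le> 3*(c+1)*rs i0"
        proof -
          have "(c+1)*(rs i + rs i0) \<le> (c+1)*(rs i0 + rs i0)" using ri c by (intro mult_left_mono) auto
          moreover have "c * rs i \<le> c * rs i0" using ri c by (intro mult_left_mono) auto
          ultimately show ?thesis using ri by (simp add: algebra_simps)
        qed
        finally show "w \<in> cball (ys i0) (3*(c+1)*rs i0)" by simp
      qed
    qed (use sets in auto)
    also have "\<dots> \<le> ennreal \<Lambda> * emeasure \<mu> (A i0)" unfolding A_def using big i0M by auto
    finally have part1: "(\<Sum>i\<in>R0. emeasure \<mu> (B i)) \<le> ennreal \<Lambda> * emeasure \<mu> (A i0)" .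
    have Asets: "A i \<in> sets \<mu>" for i unfolding A_def using sets Ss by auto
    have disjA: "A i0 \<inter> (\<Union>i\<in>J'. A i) = {}"
    proof (rule ccontr)
      assume "A i0 \<inter> (\<Union>i\<in>J'. A i) \<noteq> {}"
      then obtain i w where iw: "i \<in> J'" "w \<in> A i0" "w \<in> A i" by auto
      then have "dist (ys i) (ys i0) > (c+1)*(rs i + rs i0)" unfolding J'_def R0_def by auto
      moreover have "(c+1)*(rs i + rs i0) \<ge> rs i + rs i0"
      proof -
        have "i < M" using iw J'sub by auto
        then have "rs i + rs i0 \<ge> 0" using pos ri0 by (simp add: less_imp_le)
        then have "1 * (rs i + rs i0) \<le> (c+1)*(rs i + rs i0)" using c by (intro mult_right_mono) auto
        then show ?thesis by simp
      qed
      moreover have "dist (ys i) (ys i0) \<le> rs i + rs i0"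
        using iw dist_triangle[of "ys i" "ys i0" w] unfolding A_def by (auto simp: dist_commute)
      ultimately show False by linarith
    qed
    have "(\<Sum>i\<in>J. emeasure \<mu> (B i)) = (\<Sum>i\<in>J'. emeasure \<mu> (B i)) + (\<Sum>i\<in>R0. emeasure \<mu> (B i))"
      unfolding J'_def using sum.subset_diff[OF R0J finJ] .
    also have "\<dots> \<le> ennreal \<Lambda> * emeasure \<mu> (\<Union>i\<in>J'. A i) + ennreal \<Lambda> * emeasure \<mu> (A i0)"
      using IH part1 by (rule add_mono)
    also have "\<dots> = ennreal \<Lambda> * emeasure \<mu> (A i0 \<union> (\<Union>i\<in>J'. A i))"
      using disjA Asets finJ unfolding J'_def
      by (subst plus_emeasure[symmetric]) (auto simp: distrib_left add.commute)
    also have "\<dots> \<le> ennreal \<Lambda> * emeasure \<mu> (\<Union>i\<in>J. A i)"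
      using Asets finJ i0 unfolding J'_def by (intro mult_left_mono emeasure_mono) auto
    finally show ?thesis unfolding A_def B_def .
  qed
qed

theorem lemma3p17:
  fixes \<mu> :: "'a::polish_space measure" and p :: real and S1 :: "'a set"
  assumes "standing_setting \<mu> p"
    and "ADR0 \<mu> S1"
  shows "\<forall>c::real. c \<ge> 1 \<longrightarrow> (\<exists>C::real. C > 0 \<and>
          (\<forall>(M::nat) (xs::nat \<Rightarrow> 'a) (rs::nat \<Rightarrow> real).
             nice_family S1 c M xs rs \<and> (\<forall>i<M. 4 * c * rs i \<le> 1) \<longrightarrow>
             (\<forall>f::'a \<Rightarrow> real. loc_integrable (mrestr \<mu> S1) f \<longrightarrow>
                (\<Sum>i<M. emeasure \<mu> (cball (xs i) (rs i)) / ennreal (rs i powr p)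
                         * pow_enn p (mean_osc (mrestr \<mu> S1) f (cball (xs i) (2 * c * rs i))))
                \<le> ennreal C * (\<integral>\<^sup>+ x. pow_enn p (sharp_max (mrestr \<mu> S1) f x) * indicator S1 x \<partial>\<mu>))))"
proof (intro allI impI)
  fix c :: real assume c: "c \<ge> 1"
  note ss = assms(1)
  have p: "p > 0" using ss unfolding standing_setting_def by auto
  have S1c: "closed S1" using assms(2) unfolding ADR0_def by auto
  have S1s: "S1 \<in> sets \<mu>" using ss_closed_sets[OF ss S1c] .
  have cs: "\<And>x r. cball x r \<in> sets \<mu>" using ss_cball_sets[OF ss] .
  obtain D where D: "D \<ge> 1" and dbl: "\<forall>r\<in>{0<..2}. \<forall>x. emeasure \<mu> (cball x (2*r)) \<le> ennreal D * emeasure \<mu> (cball x r)"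
    using ss_dbl[OF ss, of 2] by auto
  obtain L where L: "L > 0" and ld: "\<forall>y\<in>S1. \<forall>r::real. 0 < r \<and> r \<le> 1 \<longrightarrow>
      emeasure \<mu> (cball y r) \<le> ennreal L * emeasure \<mu> (cball y r \<inter> S1)"
    using lower_density[OF ss assms(2) dbl D] by blast
  obtain k0 :: nat where k0: "6*c < 2^k0" using real_arch_pow[of 2 "6*c"] by auto
  define \<Lambda> where "\<Lambda> = D^k0 * L"
  have \<Lambda>pos: "\<Lambda> > 0" unfolding \<Lambda>_def using D L by simp
  have key: "emeasure \<mu> (cball y s) \<le> ennreal \<Lambda> * emeasure \<mu> (cball y r \<inter> S1)"
    if "y \<in> S1" "0 < r" "r \<le> 1" "0 < s" "s \<le> 6*c*r" "s \<le> 4" for y r s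
  proof -
    have "s \<le> 2^k0 * r" using that k0 by (smt (verit) mult_right_mono)
    then have "emeasure \<mu> (cball y s) \<le> ennreal D ^ k0 * emeasure \<mu> (cball y r)"
      using doubling_iter[OF cs dbl, of s k0 r y] that by auto
    also have "\<dots> \<le> ennreal D ^ k0 * (ennreal L * emeasure \<mu> (cball y r \<inter> S1))"
      using ld that by (intro mult_left_mono) auto
    also have "\<dots> = ennreal \<Lambda> * emeasure \<mu> (cball y r \<inter> S1)"
      unfolding \<Lambda>_def using D L by (simp add: ennreal_mult ennreal_power mult.assoc)
    finally show ?thesis .
  qed
  define K1 where "K1 = (4*c*\<Lambda>) powr p"
  have K1pos: "K1 > 0" unfolding K1_def using \<Lambda>pos c by simp
  show "\<exists>C::real. C > 0 \<and>
          (\<forall>(M::nat) (xs::nat \<Rightarrow> 'a) (rs::nat \<Rightarrow> real).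
             nice_family S1 c M xs rs \<and> (\<forall>i<M. 4 * c * rs i \<le> 1) \<longrightarrow>
             (\<forall>f::'a \<Rightarrow> real. loc_integrable (mrestr \<mu> S1) f \<longrightarrow>
                (\<Sum>i<M. emeasure \<mu> (cball (xs i) (rs i)) / ennreal (rs i powr p)
                         * pow_enn p (mean_osc (mrestr \<mu> S1) f (cball (xs i) (2 * c * rs i))))
                \<le> ennreal C * (\<integral>\<^sup>+ x. pow_enn p (sharp_max (mrestr \<mu> S1) f x) * indicator S1 x \<partial>\<mu>)))"
  proof (intro exI[of _ "K1 * \<Lambda>"] conjI allI impI)
    show "K1 * \<Lambda> > 0" using K1pos \<Lambda>pos by simp
    fix M :: nat and xs :: "nat \<Rightarrow> 'a" and rs :: "nat \<Rightarrow> real" and f :: "'a \<Rightarrow> real"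
    assume fam: "nice_family S1 c M xs rs \<and> (\<forall>i<M. 4 * c * rs i \<le> 1)"
    define \<nu> where "\<nu> = mrestr \<mu> S1"
    have nu: "\<And>A. A \<in> sets \<mu> \<Longrightarrow> emeasure \<nu> A = emeasure \<mu> (A \<inter> S1)"
      unfolding \<nu>_def using nu_eq[OF S1s] by blast
    have nusets: "sets \<nu> = sets \<mu>" unfolding \<nu>_def mrestr_def by simp
    have rpos: "\<forall>i<M. rs i > 0" and rle: "\<forall>i<M. rs i \<le> 1" and r4: "\<forall>i<M. 4 * c * rs i \<le> 1"
      and disj: "\<forall>i<M. \<forall>j<M. i \<noteq> j \<longrightarrow> cball (xs i) (rs i) \<inter> cball (xs j) (rs j) = {}"
      using fam unfolding nice_family_def by auto
    have "\<forall>i. \<exists>y. i < M \<longrightarrow> y \<in> cball (xs i) (c * rs i) \<inter> S1"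
      using fam unfolding nice_family_def by blast
    then obtain ys where ys: "\<And>i. i < M \<Longrightarrow> ys i \<in> cball (xs i) (c * rs i) \<inter> S1"
      by metis
    define A where "A i = cball (ys i) (rs i) \<inter> S1" for i
    define B where "B i = cball (xs i) (rs i)" for i
    define P where "P z = pow_enn p (sharp_max \<nu> f z)" for z
    define T where "T i = (INF z\<in>A i. P z)" for i
    have Apos: "emeasure \<mu> (A i) > 0" if "i < M" for i
    proof -
      have "0 < emeasure \<mu> (cball (ys i) (rs i))" using ss_pos[OF ss] rpos that by auto
      also have "\<dots> \<le> ennreal L * emeasure \<mu> (A i)" unfolding A_def using ld ys[OF that] rpos rle that by auto
      finally show ?thesis by (auto simp: zero_less_iff_neq_zero)
    qed
    have termb: "emeasure \<mu> (B i) / ennreal (rs i powr p) * pow_enn p (mean_osc \<nu> f (cball (xs i) (2 * c * rs i)))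
        \<le> (ennreal K1 * emeasure \<mu> (B i)) * T i" if iM: "i < M" for i
    proof -
      define r where "r = rs i"
      define x where "x = xs i"
      define y where "y = ys i"
      have r: "0 < r" "r \<le> 1" "4*c*r \<le> 1" using rpos rle r4 iM unfolding r_def by auto
      have xy: "dist x y \<le> c * r" "y \<in> S1" using ys[OF iM] unfolding x_def y_def r_def by auto
      have rcr: "r \<le> c * r" using c r by simp
      have Bfin: "emeasure \<mu> (B i) < \<infinity>" unfolding B_def using ss_finite[OF ss] .
      have "ys i \<in> A i" unfolding A_def using xy r unfolding y_def r_def by simp
      then have Ane: "A i \<noteq> {}" by blast
      show ?thesis
        unfolding T_def
      proof (rule le_mult_INF[OF Ane])
        show "ennreal K1 * emeasure \<mu> (B i) < \<infinity>" using Bfin by (simp add: ennreal_mult_less_top)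
        fix z assume zA: "z \<in> A i"
        then have zy: "dist y z \<le> r" and zS: "z \<in> S1" unfolding A_def y_def r_def by auto
        define G where "G = cball x (2*c*r)"
        define H where "H = cball z (4*c*r)"
        have GH: "G \<subseteq> H"
        proof
          fix w assume "w \<in> G"
          then have "dist x w \<le> 2*c*r" unfolding G_def by simp
          moreover have "dist z w \<le> dist z y + dist y x + dist x w"
            using dist_triangle[of z w y] dist_triangle[of y w x] by linarith
          ultimately show "w \<in> H" unfolding H_def using zy xy rcr by (simp add: dist_commute)
        qed
        have AG: "A i \<subseteq> G"
        proof
          fix w assume "w \<in> A i"
          then have "dist y w \<le> r" unfolding A_def y_def r_def by simp
          moreover have "dist x w \<le> dist x y + dist y w" by (rule dist_triangle)
          ultimately show "w \<in> G" unfolding G_def using xy rcr by simp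
        qed
        have Hsub: "H \<subseteq> cball y ((4*c+1)*r)"
        proof
          fix w assume "w \<in> H"
          then have "dist z w \<le> 4*c*r" unfolding H_def by simp
          moreover have "dist y w \<le> dist y z + dist z w" by (rule dist_triangle)
          ultimately show "w \<in> cball y ((4*c+1)*r)" using zy by (simp add: algebra_simps)
        qed
        have Gs: "G \<in> sets \<nu>" "H \<in> sets \<nu>" unfolding G_def H_def nusets using cs by auto
        have Asets: "A i \<in> sets \<mu>" unfolding A_def using cs S1s by auto
        have nuG: "emeasure \<mu> (A i) \<le> emeasure \<nu> G"
        proof -
          have "A i \<subseteq> G \<inter> S1" using AG unfolding A_def by auto
          then have "emeasure \<mu> (A i) \<le> emeasure \<mu> (G \<inter> S1)" using cs S1s unfolding G_def by (intro emeasure_mono) auto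
          then show ?thesis using nu cs unfolding G_def by simp
        qed
        have posG: "emeasure \<nu> G > 0" using Apos[OF iM] nuG by (rule less_le_trans)
        have nuH: "emeasure \<nu> H \<le> emeasure \<mu> (cball y ((4*c+1)*r))"
        proof -
          have "emeasure \<nu> H = emeasure \<mu> (H \<inter> S1)" using nu cs unfolding H_def by simp
          also have "\<dots> \<le> emeasure \<mu> (cball y ((4*c+1)*r))" using Hsub cs by (intro emeasure_mono) auto
          finally show ?thesis .
        qed
        have finH: "emeasure \<nu> H < \<infinity>" using nuH ss_finite[OF ss, of y "(4*c+1)*r"] by auto
        have "emeasure \<mu> (cball y ((4*c+1)*r)) \<le> ennreal \<Lambda> * emeasure \<mu> (cball y r \<inter> S1)"
        proof (rule key)
          show "y \<in> S1" "0 < r" "r \<le> 1" by (fact xy r)+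
          show "0 < (4*c+1)*r" using c r by simp
          show "(4*c+1)*r \<le> 6*c*r" using rcr r c by (simp add: algebra_simps)
          show "(4*c+1)*r \<le> 4" using r by (simp add: algebra_simps)
        qed
        also have "cball y r \<inter> S1 = A i" unfolding A_def y_def r_def by simp
        finally have "emeasure \<nu> H \<le> ennreal \<Lambda> * emeasure \<nu> G"
          using nuH nuG by (meson order_trans mult_left_mono zero_le)
        then have E1: "mean_osc \<nu> f G \<le> ennreal \<Lambda> * mean_osc \<nu> f H"
          by (rule mean_osc_compare[OF Gs GH posG finH])
        have rho: "4*c*r \<in> {0<..2}" using r c by auto
        have "mean_osc \<nu> f H / ennreal (4*c*r) \<le> sharp_max \<nu> f z"
          unfolding sharp_max_def H_def using rho by (rule SUP_upper2) simp
        then have E2: "mean_osc \<nu> f H \<le> ennreal (4*c*r) * sharp_max \<nu> f z"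
        proof -
          assume h: "mean_osc \<nu> f H / ennreal (4*c*r) \<le> sharp_max \<nu> f z"
          have e: "ennreal (4*c*r) > 0" "ennreal (4*c*r) < \<infinity>" using rho by auto
          have "mean_osc \<nu> f H = mean_osc \<nu> f H / ennreal (4*c*r) * ennreal (4*c*r)"
            using rho c r by (simp add: ennreal_divide_times divide_ennreal)
          also have "\<dots> \<le> sharp_max \<nu> f z * ennreal (4*c*r)" using h by (rule mult_right_mono) simp
          finally show ?thesis by (simp add: mult.commute)
        qed
        have E3: "mean_osc \<nu> f G \<le> ennreal (4*c*\<Lambda> * r) * sharp_max \<nu> f z"
        proof -
          have "mean_osc \<nu> f G \<le> ennreal \<Lambda> * (ennreal (4*c*r) * sharp_max \<nu> f z)"
            using E1 E2 by (meson order_trans mult_left_mono zero_le)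
          also have "\<dots> = ennreal (4*c*\<Lambda> * r) * sharp_max \<nu> f z"
          proof -
            have "ennreal \<Lambda> * ennreal (4*c*r) = ennreal (4*c*\<Lambda> * r)"
              using \<Lambda>pos c r by (simp add: ennreal_mult[symmetric] mult.assoc mult.left_commute mult.commute)
            then show ?thesis by (simp add: mult.assoc[symmetric])
          qed
          finally show ?thesis .
        qed
        have E4: "pow_enn p (mean_osc \<nu> f G) \<le> ennreal (K1 * r powr p) * P z"
        proof -
          have "pow_enn p (mean_osc \<nu> f G) \<le> pow_enn p (ennreal (4*c*\<Lambda> * r) * sharp_max \<nu> f z)"
            using p E3 by (rule pow_enn_mono)
          also have "\<dots> = ennreal ((4*c*\<Lambda> * r) powr p) * P z"
            unfolding P_def using p \<Lambda>pos c r by (intro pow_enn_mult) auto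
          also have "(4*c*\<Lambda> * r) powr p = K1 * r powr p"
            unfolding K1_def using \<Lambda>pos c r by (simp add: powr_mult)
          finally show ?thesis .
        qed
        have rp: "r powr p > 0" using r by simp
        have "emeasure \<mu> (B i) / ennreal (rs i powr p) * pow_enn p (mean_osc \<nu> f (cball (xs i) (2 * c * rs i)))
            = emeasure \<mu> (B i) / ennreal (r powr p) * pow_enn p (mean_osc \<nu> f G)"
          unfolding G_def r_def x_def by simp
        also have "\<dots> \<le> emeasure \<mu> (B i) / ennreal (r powr p) * (ennreal (K1 * r powr p) * P z)"
          using E4 by (rule mult_left_mono) simp
        also have "\<dots> = (ennreal K1 * emeasure \<mu> (B i)) * P z"
        proof -
          have "emeasure \<mu> (B i) / ennreal (r powr p) * ennreal (r powr p) = emeasure \<mu> (B i)"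
            using rp by (simp add: ennreal_divide_times divide_ennreal)
          then show ?thesis using K1pos rp
            by (simp add: ennreal_mult mult.assoc mult.left_commute mult.commute)
        qed
        finally show "emeasure \<mu> (B i) / ennreal (rs i powr p) * pow_enn p (mean_osc \<nu> f (cball (xs i) (2 * c * rs i)))
            \<le> (ennreal K1 * emeasure \<mu> (B i)) * P z" .
      qed
    qed
    show "(\<Sum>i<M. emeasure \<mu> (cball (xs i) (rs i)) / ennreal (rs i powr p)
                         * pow_enn p (mean_osc (mrestr \<mu> S1) f (cball (xs i) (2 * c * rs i))))
                \<le> ennreal (K1 * \<Lambda>) * (\<integral>\<^sup>+ x. pow_enn p (sharp_max (mrestr \<mu> S1) f x) * indicator S1 x \<partial>\<mu>)"
      unfolding \<nu>_def[symmetric] P_def[symmetric] B_def[symmetric]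
    proof -
      have sum1: "(\<Sum>i<M. emeasure \<mu> (B i) / ennreal (rs i powr p) * pow_enn p (mean_osc \<nu> f (cball (xs i) (2 * c * rs i))))
          \<le> (\<Sum>i<M. (ennreal K1 * emeasure \<mu> (B i)) * T i)"
        using termb by (intro sum_mono) auto
      have Asets: "A i \<in> sets \<mu>" for i unfolding A_def using cs S1s by auto
      show "(\<Sum>i<M. emeasure \<mu> (B i) / ennreal (rs i powr p) * pow_enn p (mean_osc \<nu> f (cball (xs i) (2 * c * rs i))))
          \<le> ennreal (K1 * \<Lambda>) * (\<integral>\<^sup>+ x. P x * indicator S1 x \<partial>\<mu>)"
      proof (cases "\<exists>i<M. T i = \<infinity>")
        case True
        then obtain i where i: "i < M" "T i = \<infinity>" by blast
        have "\<infinity> * emeasure \<mu> (A i) = (\<integral>\<^sup>+ x. \<infinity> * indicator (A i) x \<partial>\<mu>)"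
          using Asets by (simp add: nn_integral_cmult_indicator)
        also have "\<dots> \<le> (\<integral>\<^sup>+ x. P x * indicator S1 x \<partial>\<mu>)"
        proof (intro nn_integral_mono)
          fix x
          show "\<infinity> * indicator (A i) x \<le> P x * indicator S1 x"
          proof (cases "x \<in> A i")
            case True
            then have "T i \<le> P x" unfolding T_def by (rule INF_lower)
            then have "P x = \<infinity>" using i by (simp add: top_unique)
            moreover have "x \<in> S1" using True unfolding A_def by auto
            ultimately show ?thesis using True by simp
          qed simp
        qed
        finally have "(\<integral>\<^sup>+ x. P x * indicator S1 x \<partial>\<mu>) = \<infinity>"
          using Apos[OF i(1)] by (simp add: ennreal_mult_top top_unique)
        moreover have "ennreal (K1 * \<Lambda>) > 0" using K1pos \<Lambda>pos by simp
        ultimately have "ennreal (K1 * \<Lambda>) * (\<integral>\<^sup>+ x. P x * indicator S1 x \<partial>\<mu>) = \<infinity>"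
          using K1pos \<Lambda>pos by (simp add: ennreal_mult_top del: ennreal_mult')
        then show ?thesis by simp
      next
        case False
        define t where "t i = enn2real (T i)" for i
        have tT: "ennreal (t i) = T i" if "i < M" for i
          using False that unfolding t_def by (simp add: less_top)
        define g where "g z = (SUP i\<in>{..<M}. ennreal (t i) * indicator (A i) z)" for z
        have gm: "g \<in> borel_measurable \<mu>" unfolding g_def
          using Asets by (intro borel_measurable_SUP) auto
        have pack: "(\<Sum>i\<in>J. emeasure \<mu> (B i)) \<le> ennreal \<Lambda> * emeasure \<mu> (\<Union>i\<in>J. A i)"
          if "J \<subseteq> {..<M}" for J
          unfolding A_def B_def
        proof (rule packing[OF cs S1s c rpos disj _ _ that])
          show "\<forall>i<M. dist (xs i) (ys i) \<le> c * rs i" using ys by auto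
          show "\<forall>i<M. emeasure \<mu> (cball (ys i) (3 * (c + 1) * rs i)) \<le> ennreal \<Lambda> * emeasure \<mu> (cball (ys i) (rs i) \<inter> S1)"
          proof (intro allI impI key)
            fix i assume i: "i < M"
            show "ys i \<in> S1" using ys[OF i] by auto
            show "0 < rs i" "rs i \<le> 1" using rpos rle i by auto
            show "0 < 3 * (c + 1) * rs i" using rpos i c by simp
            show "3 * (c + 1) * rs i \<le> 6 * c * rs i" using rpos i c by (simp add: algebra_simps)
            have a: "4 * c * rs i \<le> 1" using r4 i by auto
            have b: "rs i \<le> c * rs i" using rpos i c by simp
            show "3 * (c + 1) * rs i \<le> 4" using a b by (simp add: algebra_simps)
          qed
        qed
        have lc: "(\<Sum>i\<in>{..<M}. emeasure \<mu> (B i) * ennreal (t i)) \<le> ennreal \<Lambda> * (\<integral>\<^sup>+ z. g z \<partial>\<mu>)"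
        proof (rule layer_cake_fin[where A=A])
          show "finite {..<M}" by simp
          show "\<And>i. i \<in> {..<M} \<Longrightarrow> A i \<in> sets \<mu>" using Asets by auto
          show "\<And>i. i \<in> {..<M} \<Longrightarrow> 0 \<le> t i" unfolding t_def by simp
          show "\<And>J. J \<subseteq> {..<M} \<Longrightarrow> (\<Sum>i\<in>J. emeasure \<mu> (B i)) \<le> ennreal \<Lambda> * emeasure \<mu> (\<Union>i\<in>J. A i)"
            by (rule pack)
          show "g \<in> borel_measurable \<mu>" by (rule gm)
          fix i z assume "i \<in> {..<M}" "z \<in> A i"
          then show "ennreal (t i) \<le> g z" unfolding g_def
            by (intro SUP_upper2[of i]) auto
        qed
        have gle: "(\<integral>\<^sup>+ z. g z \<partial>\<mu>) \<le> (\<integral>\<^sup>+ x. P x * indicator S1 x \<partial>\<mu>)"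
        proof (intro nn_integral_mono)
          fix z
          show "g z \<le> P z * indicator S1 z" unfolding g_def
          proof (rule SUP_least)
            fix i assume i: "i \<in> {..<M}"
            show "ennreal (t i) * indicator (A i) z \<le> P z * indicator S1 z"
            proof (cases "z \<in> A i")
              case True
              then have "T i \<le> P z" unfolding T_def by (rule INF_lower)
              moreover have "z \<in> S1" using True unfolding A_def by auto
              ultimately show ?thesis using True tT i by simp
            qed simp
          qed
        qed
        have "(\<Sum>i<M. emeasure \<mu> (B i) / ennreal (rs i powr p) * pow_enn p (mean_osc \<nu> f (cball (xs i) (2 * c * rs i))))
            \<le> (\<Sum>i<M. (ennreal K1 * emeasure \<mu> (B i)) * ennreal (t i))"
          using sum1 tT by simp
        also have "\<dots> = ennreal K1 * (\<Sum>i\<in>{..<M}. emeasure \<mu> (B i) * ennreal (t i))"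
          by (simp add: sum_distrib_left mult.assoc)
        also have "\<dots> \<le> ennreal K1 * (ennreal \<Lambda> * (\<integral>\<^sup>+ x. P x * indicator S1 x \<partial>\<mu>))"
        proof (intro mult_left_mono)
          show "(\<Sum>i\<in>{..<M}. emeasure \<mu> (B i) * ennreal (t i)) \<le> ennreal \<Lambda> * (\<integral>\<^sup>+ x. P x * indicator S1 x \<partial>\<mu>)"
            using lc order_trans mult_left_mono[OF gle, of "ennreal \<Lambda>"] by auto
        qed simp
        also have "\<dots> = ennreal (K1 * \<Lambda>) * (\<integral>\<^sup>+ x. P x * indicator S1 x \<partial>\<mu>)"
          using K1pos \<Lambda>pos by (simp add: ennreal_mult mult.assoc)
        finally show ?thesis .
      qed
    qed
  qed
qed

end
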